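(* Let $n\ge1$, let $\preceq$ be an admissible order on $L([0,1])$. Then: (i) for $F\colon L([0,1])^2\to L([0,1])$ with $F(X,\mathbf1)=X$ for all $X$ and $F$ non-decreasing in the second variable, the IV Sugeno-like $FG$-functional $\mathbf S_m^{F,\vee}$ is idempotent for every IV fuzzy measure $m$; (ii) for $G=\vee$ or $G=\mathrm{Proj}_1$, the functional $\mathbf S_m^{\wedge,G}$ is idempotent for every IV fuzzy measure $m$; (iii) $\mathbf S_m^{\wedge,\vee}$ is idempotent for every IV fuzzy measure $m$.
   Context: $N=\{1,\dots,n\}$. $L([0,1])=\{[a,b]:0\le a\le b\le1\}$, $\mathbf0=[0,0]$, $\mathbf1=[1,1]$. An admissible order $\preceq$ is a total order on $L([0,1])$ such that $[a,b]\preceq[c,d]$ whenever $a\le c$ and $b\le d$. $\vee,\wedge$ denote maximum and minimum w.r.t. $\preceq$; monotonicity is w.r.t. $\preceq$; $\mathrm{Proj}_1(X_1,\dots,X_n)=X_1$. Idempotent means $\mathbf S(X,\dots,X)=X$ for all $X$. An IV fuzzy measure w.r.t. $\preceq$ is $m\colon2^N\to L([0,1])$ with $m(\emptyset)=\mathbf0$, $m(N)=\mathbf1$, $m(A)\preceq m(B)$ for $A\subseteq B$. For a permutation $\sigma$, $E_{\sigma(i)}=\{\sigma(i),\dots,\sigma(n)\}$. The IV Sugeno-like $FG$-functional is $\mathbf S_m^{F,G}(X_1,\dots,X_n)=G\big(F(X_{\sigma(1)},m(E_{\sigma(1)})),\dots,F(X_{\sigma(n)},m(E_{\sigma(n)}))\big)$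 with $\sigma$ any permutation such that $X_{\sigma(1)}\preceq\dots\preceq X_{\sigma(n)}$; it is defined when this value is independent of the choice of $\sigma$ for all inputs. *)

theory Defs
  imports Complex_Main "HOL-Combinatorics.Permutations"
begin

text \<open>Intervals [a,b] in L([0,1]) are represented as pairs (a,b) of reals.\<close>
type_synonym ivl = "real \<times> real"

definition L01 :: "ivl set" where
  "L01 = {(a,b). 0 \<le> a \<and> a \<le> b \<and> b \<le> 1}"

definition ivzero :: ivl where "ivzero = (0,0)"
definition ivone :: ivl where "ivone = (1,1)"

definition admissible_order :: "(ivl \<Rightarrow> ivl \<Rightarrow> bool) \<Rightarrow> bool" where
  "admissible_order le \<longleftrightarrow>
     (\<forall>x\<in>L01. le x x) \<and>
     (\<forall>x\<in>L01. \<forall>y\<in>L01. le x y \<and> le y x \<longrightarrow> x = y) \<and>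
     (\<forall>x\<in>L01. \<forall>y\<in>L01. \<forall>z\<in>L01. le x y \<and> le y z \<longrightarrow> le x z) \<and>
     (\<forall>x\<in>L01. \<forall>y\<in>L01. le x y \<or> le y x) \<and>
     (\<forall>a b c d. (a,b) \<in> L01 \<and> (c,d) \<in> L01 \<and> a \<le> c \<and> b \<le> d \<longrightarrow> le (a,b) (c,d))"

definition ivmax :: "(ivl \<Rightarrow> ivl \<Rightarrow> bool) \<Rightarrow> ivl \<Rightarrow> ivl \<Rightarrow> ivl" where
  "ivmax le x y = (if le x y then y else x)"

definition ivmin :: "(ivl \<Rightarrow> ivl \<Rightarrow> bool) \<Rightarrow> ivl \<Rightarrow> ivl \<Rightarrow> ivl" where
  "ivmin le x y = (if le x y then x else y)"

fun ivmax_list :: "(ivl \<Rightarrow> ivl \<Rightarrow> bool) \<Rightarrow> ivl list \<Rightarrow> ivl" where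
  "ivmax_list le [] = ivzero"
| "ivmax_list le (x # xs) = fold (ivmax le) xs x"

definition proj1 :: "ivl list \<Rightarrow> ivl" where
  "proj1 xs = hd xs"

definition iv_fuzzy_measure :: "(ivl \<Rightarrow> ivl \<Rightarrow> bool) \<Rightarrow> nat \<Rightarrow> (nat set \<Rightarrow> ivl) \<Rightarrow> bool" where
  "iv_fuzzy_measure le n m \<longleftrightarrow>
     (\<forall>A. A \<subseteq> {1..n} \<longrightarrow> m A \<in> L01) \<and>
     m {} = ivzero \<and> m {1..n} = ivone \<and>
     (\<forall>A B. A \<subseteq> B \<and> B \<subseteq> {1..n} \<longrightarrow> le (m A) (m B))"

definition sorting_perm :: "(ivl \<Rightarrow> ivl \<Rightarrow> bool) \<Rightarrow> nat \<Rightarrow> (nat \<Rightarrow> ivl) \<Rightarrow> (nat \<Rightarrow> nat) \<Rightarrow> bool" where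
  "sorting_perm le n X \<sigma> \<longleftrightarrow>
     \<sigma> permutes {1..n} \<and> (\<forall>i j. 1 \<le> i \<and> i \<le> j \<and> j \<le> n \<longrightarrow> le (X (\<sigma> i)) (X (\<sigma> j)))"

definition sugeno_FG ::
  "nat \<Rightarrow> (ivl \<Rightarrow> ivl \<Rightarrow> ivl) \<Rightarrow> (ivl list \<Rightarrow> ivl) \<Rightarrow> (nat set \<Rightarrow> ivl) \<Rightarrow> (nat \<Rightarrow> ivl) \<Rightarrow> (nat \<Rightarrow> nat) \<Rightarrow> ivl" where
  "sugeno_FG n F G m X \<sigma> = G (map (\<lambda>i. F (X (\<sigma> i)) (m (\<sigma> ` {i..n}))) [1..<n+1])"

definition sugeno_idempotent ::
  "(ivl \<Rightarrow> ivl \<Rightarrow> bool) \<Rightarrow> nat \<Rightarrow> (ivl \<Rightarrow> ivl \<Rightarrow> ivl) \<Rightarrow> (ivl list \<Rightarrow> ivl) \<Rightarrow> (nat set \<Rightarrow> ivl) \<Rightarrow> bool" where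
  "sugeno_idempotent le n F G m \<longleftrightarrow>
     (\<forall>X\<in>L01. \<forall>\<sigma>. sorting_perm le n (\<lambda>_. X) \<sigma> \<longrightarrow> sugeno_FG n F G m (\<lambda>_. X) \<sigma> = X)"

end

theory Submission
  imports Defs
begin

lemma fold_max_id:
  assumes "\<forall>y\<in>set ys. le y X"
  shows "fold (ivmax le) ys X = X"
  using assms by (induction ys) (auto simp: ivmax_def)

lemma list_split:
  assumes "n \<ge> 1" "\<sigma> permutes {1..n}"
  shows "map (\<lambda>i. F X (m (\<sigma> ` {i..n}))) [1..<n+1]
       = F X (m {1..n}) # map (\<lambda>i. F X (m (\<sigma> ` {i..n}))) [2..<n+1]"
proof -
  have "[1..<n+1] = 1 # [Suc 1..<n+1]" using assms(1) by (intro upt_conv_Cons) simp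
  hence e: "[1..<n+1] = 1 # [2..<n+1]" by (simp only: Suc_1)
  have "\<sigma> ` {1..n} = {1..n}" using assms(2) by (rule permutes_image)
  thus ?thesis by (simp only: e list.map)
qed

lemma meas_props:
  assumes "iv_fuzzy_measure le n m" "\<sigma> permutes {1..n}" "i \<ge> 1"
  shows "m (\<sigma> ` {i..n}) \<in> L01 \<and> le (m (\<sigma> ` {i..n})) ivone"
proof -
  have s: "\<sigma> ` {i..n} \<subseteq> {1..n}"
    using permutes_image[OF assms(2)] assms(3) by auto
  have "m {1..n} = ivone" "\<forall>A. A \<subseteq> {1..n} \<longrightarrow> m A \<in> L01"
    "\<forall>A B. A \<subseteq> B \<and> B \<subseteq> {1..n} \<longrightarrow> le (m A) (m B)"
    using assms(1) unfolding iv_fuzzy_measure_def by auto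
  hence "le (m (\<sigma> ` {i..n})) (m {1..n})" "m (\<sigma> ` {i..n}) \<in> L01" using s by (blast, blast)
  thus ?thesis using \<open>m {1..n} = ivone\<close> by simp
qed

lemma ivone_L01: "ivone \<in> L01" by (simp add: ivone_def L01_def)

theorem corollary2:
  fixes le :: "ivl \<Rightarrow> ivl \<Rightarrow> bool" and n :: nat
  assumes "n \<ge> 1" and "admissible_order le"
  shows "(\<forall>F. (\<forall>X\<in>L01. \<forall>Y\<in>L01. F X Y \<in> L01) \<and>
              (\<forall>X\<in>L01. F X ivone = X) \<and>
              (\<forall>X\<in>L01. \<forall>Y\<in>L01. \<forall>Z\<in>L01. le Y Z \<longrightarrow> le (F X Y) (F X Z)) \<longrightarrow>
              (\<forall>m. iv_fuzzy_measure le n m \<longrightarrow> sugeno_idempotent le n F (ivmax_list le) m))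
       \<and> (\<forall>G\<in>{ivmax_list le, proj1}.
              \<forall>m. iv_fuzzy_measure le n m \<longrightarrow> sugeno_idempotent le n (ivmin le) G m)
       \<and> (\<forall>m. iv_fuzzy_measure le n m \<longrightarrow> sugeno_idempotent le n (ivmin le) (ivmax_list le) m)"
proof -
  have ad: "\<forall>x\<in>L01. \<forall>y\<in>L01. le x y \<or> le y x"
    "\<forall>x\<in>L01. \<forall>y\<in>L01. \<forall>z\<in>L01. le x y \<and> le y z \<longrightarrow> le x z"
    "\<forall>a b c d. (a,b) \<in> L01 \<and> (c,d) \<in> L01 \<and> a \<le> c \<and> b \<le> d \<longrightarrow> le (a,b) (c,d)"
    using assms(2) unfolding admissible_order_def by blast+
  have leone: "le X ivone" if "X \<in> L01" for X
  proof -
    obtain a b where ab: "X = (a,b)" by fastforce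
    hence "(a,b) \<in> L01" "a \<le> 1" "b \<le> 1" using that by (auto simp: L01_def)
    hence "le (a,b) (1,1)" using ad(3) ivone_L01 unfolding ivone_def by blast
    thus ?thesis using ab by (simp add: ivone_def)
  qed
  have minone: "ivmin le X ivone = X" if "X \<in> L01" for X
    using leone[OF that] by (simp add: ivmin_def)
  have minle: "le (ivmin le X Y) X" if "X \<in> L01" "Y \<in> L01" for X Y
  proof (cases "le X Y")
    case True thus ?thesis using ad(1)[rule_format, OF that(1) that(1)] by (simp add: ivmin_def)
  next
    case False thus ?thesis using ad(1)[rule_format, OF that(1) that(2)] by (simp add: ivmin_def)
  qed
  show ?thesis
  proof (intro conjI allI impI ballI)
    fix F m assume hF: "(\<forall>X\<in>L01. \<forall>Y\<in>L01. F X Y \<in> L01) \<and>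
              (\<forall>X\<in>L01. F X ivone = X) \<and>
              (\<forall>X\<in>L01. \<forall>Y\<in>L01. \<forall>Z\<in>L01. le Y Z \<longrightarrow> le (F X Y) (F X Z))"
      and hm: "iv_fuzzy_measure le n m"
    show "sugeno_idempotent le n F (ivmax_list le) m"
      unfolding sugeno_idempotent_def sugeno_FG_def
    proof (intro ballI allI impI)
      fix X \<sigma> assume X: "X \<in> L01" and s0: "sorting_perm le n (\<lambda>_. X) \<sigma>"
      have s: "\<sigma> permutes {1..n} \<and> True" using s0 by (simp add: sorting_perm_def)
      have m1: "m {1..n} = ivone" using hm by (simp add: iv_fuzzy_measure_def)
      show "ivmax_list le (map (\<lambda>i. F X (m (\<sigma> ` {i..n}))) [1..<n + 1]) = X"
      proof -
        have hF1: "\<forall>X\<in>L01. F X ivone = X" using conjunct1[OF conjunct2[OF hF]] .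
        have hF2: "\<forall>X\<in>L01. \<forall>Y\<in>L01. \<forall>Z\<in>L01. le Y Z \<longrightarrow> le (F X Y) (F X Z)"
          using conjunct2[OF conjunct2[OF hF]] .
        have FX: "F X ivone = X" using hF1 X by simp
        have "\<forall>y\<in>set (map (\<lambda>i. F X (m (\<sigma> ` {i..n}))) [2..<n + 1]). le y X"
        proof
          fix y assume "y \<in> set (map (\<lambda>i. F X (m (\<sigma> ` {i..n}))) [2..<n + 1])"
          then obtain i where i0: "i \<in> {2..<n+1}" and y: "y = F X (m (\<sigma> ` {i..n}))" unfolding set_map set_upt by blast
          have i: "i \<ge> 1" using i0 by simp
          have "m (\<sigma> ` {i..n}) \<in> L01" "le (m (\<sigma> ` {i..n})) ivone"
            using meas_props[OF hm conjunct1[OF s] i] by auto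
          hence "le y (F X ivone)" using hF2[rule_format, OF X _ ivone_L01] y by simp
          thus "le y X" using FX by simp
        qed
        thus ?thesis unfolding list_split[OF assms(1) conjunct1[OF s]] m1 FX
          by (simp only: ivmax_list.simps fold_max_id[where le=le])
      qed
    qed
  next
    fix G m assume G: "G \<in> {ivmax_list le, proj1}" and hm: "iv_fuzzy_measure le n m"
    show "sugeno_idempotent le n (ivmin le) G m"
      unfolding sugeno_idempotent_def sugeno_FG_def
    proof (intro ballI allI impI)
      fix X \<sigma> assume X: "X \<in> L01" and s0: "sorting_perm le n (\<lambda>_. X) \<sigma>"
      have s: "\<sigma> permutes {1..n} \<and> True" using s0 by (simp add: sorting_perm_def)
      have m1: "m {1..n} = ivone" using hm by (simp add: iv_fuzzy_measure_def)
      have FX: "ivmin le X ivone = X" using minone[OF X] .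
      have all: "\<forall>y\<in>set (map (\<lambda>i. ivmin le X (m (\<sigma> ` {i..n}))) [2..<n + 1]). le y X"
      proof
        fix y assume "y \<in> set (map (\<lambda>i. ivmin le X (m (\<sigma> ` {i..n}))) [2..<n + 1])"
        then obtain i where i0: "i \<in> {2..<n+1}" and y: "y = ivmin le X (m (\<sigma> ` {i..n}))" unfolding set_map set_upt by blast
          have i: "i \<ge> 1" using i0 by simp
        have "m (\<sigma> ` {i..n}) \<in> L01"
          using meas_props[OF hm conjunct1[OF s] i] by auto
        thus "le y X" using minle[OF X] y by simp
      qed
      show "G (map (\<lambda>i. ivmin le X (m (\<sigma> ` {i..n}))) [1..<n + 1]) = X"
        unfolding list_split[OF assms(1) conjunct1[OF s]] m1 FX
        using G
      proof (elim insertE emptyE)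
        assume "G = ivmax_list le"
        thus "G (X # map (\<lambda>i. ivmin le X (m (\<sigma> ` {i..n}))) [2..<n + 1]) = X"
          by (simp only: FX ivmax_list.simps fold_max_id[where le=le, OF all])
      next
        assume "G = proj1"
        thus "G (X # map (\<lambda>i. ivmin le X (m (\<sigma> ` {i..n}))) [2..<n + 1]) = X"
          by (simp only: FX proj1_def list.sel)
      qed
    qed
  next
    fix m assume hm: "iv_fuzzy_measure le n m"
    show "sugeno_idempotent le n (ivmin le) (ivmax_list le) m"
      unfolding sugeno_idempotent_def sugeno_FG_def
    proof (intro ballI allI impI)
      fix X \<sigma> assume X: "X \<in> L01" and s0: "sorting_perm le n (\<lambda>_. X) \<sigma>"
      have s: "\<sigma> permutes {1..n} \<and> True" using s0 by (simp add: sorting_perm_def)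
      have m1: "m {1..n} = ivone" using hm by (simp add: iv_fuzzy_measure_def)
      have FX: "ivmin le X ivone = X" using minone[OF X] .
      have all: "\<forall>y\<in>set (map (\<lambda>i. ivmin le X (m (\<sigma> ` {i..n}))) [2..<n + 1]). le y X"
      proof
        fix y assume "y \<in> set (map (\<lambda>i. ivmin le X (m (\<sigma> ` {i..n}))) [2..<n + 1])"
        then obtain i where i0: "i \<in> {2..<n+1}" and y: "y = ivmin le X (m (\<sigma> ` {i..n}))" unfolding set_map set_upt by blast
          have i: "i \<ge> 1" using i0 by simp
        have "m (\<sigma> ` {i..n}) \<in> L01"
          using meas_props[OF hm conjunct1[OF s] i] by auto
        thus "le y X" using minle[OF X] y by simp
      qed
      show "ivmax_list le (map (\<lambda>i. ivmin le X (m (\<sigma> ` {i..n}))) [1..<n + 1]) = X"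
        unfolding list_split[OF assms(1) conjunct1[OF s]] m1 FX
        by (simp only: ivmax_list.simps fold_max_id[where le=le, OF all])
    qed
  qed
qed

end
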